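(* Let $S$ be a $0$-left cancellative semigroup which is categorical at zero. Then for every $\theta$-constructible set $X\subseteq S'$ there is a right ideal $R$ of $S$ such that $X=R\setminus\{0\}$.
   Context: $S$ is a semigroup with zero $0$; $S'=S\setminus\{0\}$. $S$ is $0$-left cancellative if $st=sr\neq0$ implies $t=r$. $S$ is categorical at zero if for all $r,s,t\in S$, $rs\neq0$ and $st\neq0$ imply $rst\neq0$. For $s\in S$ let $F_s=\{x\in S': sx\neq0\}$, $E_s=sS\setminus\{0\}$, and let $\theta_s:F_s\to E_s$, $\theta_s(x)=sx$ (a bijection, viewed as a partial bijection of $S'$). The inverse hull $\mathcal H(S)$ is the inverse subsemigroup of the symmetric inverse semigroup $\mathcal I(S')$ of all partial bijections of $S'$ generated by $\{\theta_s:s\in S\}$. A subset $X\subseteq S'$ is $\theta$-constructible if the identity map $\mathrm{id}_X$ belongs to $\mathcal H(S)$. A right ideal is a subset $R\subseteq S$ with $RS\subseteq R$ (it contains $0$). *)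

theory Defs
  imports Main
begin

text \<open>A semigroup with zero is modelled as a type of class semigroup_mult and mult_zero
  (0 * a = 0 = a * 0). S' is the set of nonzero elements. Partial bijections of S'
  are partial maps 'a \<rightharpoonup> 'a.\<close>

definition zero_left_cancellative :: "('a::{semigroup_mult,mult_zero}) itself \<Rightarrow> bool" where
  "zero_left_cancellative _ \<longleftrightarrow> (\<forall>s t r :: 'a. s * t = s * r \<and> s * t \<noteq> 0 \<longrightarrow> t = r)"

definition categorical_at_zero :: "('a::{semigroup_mult,mult_zero}) itself \<Rightarrow> bool" where
  "categorical_at_zero _ \<longleftrightarrow> (\<forall>r s t :: 'a. r * s \<noteq> 0 \<and> s * t \<noteq> 0 \<longrightarrow> r * s * t \<noteq> 0)"

definition F_set :: "'a::{semigroup_mult,mult_zero} \<Rightarrow> 'a set" where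
  "F_set s = {x. x \<noteq> 0 \<and> s * x \<noteq> 0}"

definition E_set :: "'a::{semigroup_mult,mult_zero} \<Rightarrow> 'a set" where
  "E_set s = (\<lambda>x. s * x) ` UNIV - {0}"

definition theta :: "'a::{semigroup_mult,mult_zero} \<Rightarrow> ('a \<rightharpoonup> 'a)" where
  "theta s = (\<lambda>x. if x \<in> F_set s then Some (s * x) else None)"

definition pinv :: "('a \<rightharpoonup> 'a) \<Rightarrow> ('a \<rightharpoonup> 'a)" where
  "pinv f = (\<lambda>y. if \<exists>x. f x = Some y then Some (THE x. f x = Some y) else None)"

inductive_set inverse_hull :: "('a::{semigroup_mult,mult_zero} \<rightharpoonup> 'a) set" where
  gen: "theta s \<in> inverse_hull"
| comp: "f \<in> inverse_hull \<Longrightarrow> g \<in> inverse_hull \<Longrightarrow> (f \<circ>\<^sub>m g) \<in> inverse_hull"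
| inv: "f \<in> inverse_hull \<Longrightarrow> pinv f \<in> inverse_hull"

definition pid :: "'a set \<Rightarrow> ('a \<rightharpoonup> 'a)" where
  "pid X = (\<lambda>x. if x \<in> X then Some x else None)"

definition theta_constructible :: "'a::{semigroup_mult,mult_zero} set \<Rightarrow> bool" where
  "theta_constructible X \<longleftrightarrow> X \<subseteq> - {0} \<and> pid X \<in> inverse_hull"

definition right_ideal :: "'a::{semigroup_mult,mult_zero} set \<Rightarrow> bool" where
  "right_ideal R \<longleftrightarrow> (\<forall>r\<in>R. \<forall>s. r * s \<in> R)"

end

theory Submission
  imports Defs
begin

definition good :: "('a::{semigroup_mult,mult_zero} \<rightharpoonup> 'a) \<Rightarrow> bool" where
  "good f \<longleftrightarrow> (\<forall>x y. f x = Some y \<longrightarrow> x \<noteq> 0 \<and> y \<noteq> 0 \<and>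
      (\<forall>s. (x*s \<noteq> 0 \<longleftrightarrow> y*s \<noteq> 0) \<and> (x*s \<noteq> 0 \<longrightarrow> f (x*s) = Some (y*s))))
    \<and> (\<forall>x x' y. f x = Some y \<and> f x' = Some y \<longrightarrow> x = x')"

lemma pinv_Some:
  assumes "\<forall>x x' y. f x = Some y \<and> f x' = Some y \<longrightarrow> x = x'"
  shows "pinv f y = Some x \<longleftrightarrow> f x = Some y"
proof
  assume "pinv f y = Some x"
  then have ex: "\<exists>x. f x = Some y" and xe: "x = (THE x. f x = Some y)"
    by (auto simp: pinv_def split: if_splits)
  then obtain z where z: "f z = Some y" by blast
  have "(THE x. f x = Some y) = z" using z assms by (intro the_equality) auto
  then show "f x = Some y" using xe z by simp
next
  assume a: "f x = Some y"
  have "(THE x. f x = Some y) = x" using a assms by (intro the_equality) auto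
  then show "pinv f y = Some x" using a by (auto simp: pinv_def)
qed

lemma good_hull:
  assumes c: "zero_left_cancellative TYPE('a::{semigroup_mult,mult_zero})"
    and k: "categorical_at_zero TYPE('a)"
    and "f \<in> (inverse_hull :: ('a \<rightharpoonup> 'a) set)"
  shows "good f"
  using assms(3)
proof induction
  case (gen s)
  have A: "theta s x = Some y \<longleftrightarrow> x \<noteq> 0 \<and> s*x \<noteq> 0 \<and> y = s*x" for x y
    by (auto simp: theta_def F_set_def)
  have P1: "x*t \<noteq> 0 \<longleftrightarrow> s*x*t \<noteq> 0" if "s*x \<noteq> 0" for x t
  proof
    assume "x*t \<noteq> 0" then show "s*x*t \<noteq> 0" using that k
      unfolding categorical_at_zero_def by blast
  next
    assume "s*x*t \<noteq> 0" then show "x*t \<noteq> 0" by (auto simp: mult.assoc)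
  qed
  have P2: "x = x'" if "s*x = s*x'" "s*x \<noteq> 0" for x x'
    using c that unfolding zero_left_cancellative_def by blast
  show ?case unfolding good_def A
  proof (rule conjI)
    show "\<forall>x y. x \<noteq> 0 \<and> s * x \<noteq> 0 \<and> y = s * x \<longrightarrow> x \<noteq> 0 \<and> y \<noteq> 0 \<and>
      (\<forall>t. (x * t \<noteq> 0) = (y * t \<noteq> 0) \<and> (x * t \<noteq> 0 \<longrightarrow> x * t \<noteq> 0 \<and> s * (x * t) \<noteq> 0 \<and> y * t = s * (x * t)))"
    proof (intro allI impI)
      fix x y t assume h: "x \<noteq> 0 \<and> s * x \<noteq> 0 \<and> y = s * x"
      then have "(x * t \<noteq> 0) = (y * t \<noteq> 0)" using P1 by simp
      then show "x \<noteq> 0 \<and> y \<noteq> 0 \<and>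
      (\<forall>t. (x * t \<noteq> 0) = (y * t \<noteq> 0) \<and> (x * t \<noteq> 0 \<longrightarrow> x * t \<noteq> 0 \<and> s * (x * t) \<noteq> 0 \<and> y * t = s * (x * t)))"
        using h P1[of x] by (simp add: mult.assoc)
    qed
    show "\<forall>x x' y. (x \<noteq> 0 \<and> s * x \<noteq> 0 \<and> y = s * x) \<and> x' \<noteq> 0 \<and> s * x' \<noteq> 0 \<and> y = s * x' \<longrightarrow> x = x'"
      using P2 by blast
  qed
next
  case (comp f g)
  have C: "(f \<circ>\<^sub>m g) x = Some y \<longleftrightarrow> (\<exists>z. g x = Some z \<and> f z = Some y)" for x y
    by (auto simp: map_comp_def split: option.splits)
  show ?case unfolding good_def C
  proof (intro conjI allI impI)
    fix x y assume "\<exists>z. g x = Some z \<and> f z = Some y"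
    then obtain z where z: "g x = Some z" "f z = Some y" by blast
    have G: "x \<noteq> 0 \<and> z \<noteq> 0 \<and> (\<forall>s. (x*s \<noteq> 0 \<longleftrightarrow> z*s \<noteq> 0) \<and> (x*s \<noteq> 0 \<longrightarrow> g (x*s) = Some (z*s)))"
      using comp.IH(2) z(1) unfolding good_def by blast
    have F: "z \<noteq> 0 \<and> y \<noteq> 0 \<and> (\<forall>s. (z*s \<noteq> 0 \<longleftrightarrow> y*s \<noteq> 0) \<and> (z*s \<noteq> 0 \<longrightarrow> f (z*s) = Some (y*s)))"
      using comp.IH(1) z(2) unfolding good_def by blast
    show "x \<noteq> 0" "y \<noteq> 0" using G F by auto
    fix s
    show "(x * s \<noteq> 0) = (y * s \<noteq> 0)" using G F by blast
    assume "x * s \<noteq> 0" then show "\<exists>z. g (x * s) = Some z \<and> f z = Some (y * s)" using G F by blast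
  next
    fix x x' y assume "(\<exists>z. g x = Some z \<and> f z = Some y) \<and> (\<exists>z. g x' = Some z \<and> f z = Some y)"
    then obtain z z' where zz: "g x = Some z" "f z = Some y" "g x' = Some z'" "f z' = Some y" by blast
    have fi: "\<forall>x x' y. f x = Some y \<and> f x' = Some y \<longrightarrow> x = x'" using comp.IH(1) unfolding good_def by blast
    have gi: "\<forall>x x' y. g x = Some y \<and> g x' = Some y \<longrightarrow> x = x'" using comp.IH(2) unfolding good_def by blast
    have "z = z'" using fi zz(2,4) by blast
    then show "x = x'" using gi zz(1,3) by blast
  qed
next
  case (inv f)
  have inj: "\<forall>x x' y. f x = Some y \<and> f x' = Some y \<longrightarrow> x = x'"
    using inv.IH by (simp add: good_def)
  show ?case unfolding good_def pinv_Some[OF inj]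
  proof (intro conjI allI impI)
    fix x y assume a: "f y = Some x"
    have F: "y \<noteq> 0 \<and> x \<noteq> 0 \<and> (\<forall>s. (y*s \<noteq> 0 \<longleftrightarrow> x*s \<noteq> 0) \<and> (y*s \<noteq> 0 \<longrightarrow> f (y*s) = Some (x*s)))"
      using inv.IH a unfolding good_def by blast
    show "x \<noteq> 0" "y \<noteq> 0" using F by auto
    fix s
    show "(x * s \<noteq> 0) = (y * s \<noteq> 0)" using F by blast
    assume "x * s \<noteq> 0" then show "f (y * s) = Some (x * s)" using F by blast
  next
    fix x x' y assume "f y = Some x \<and> f y = Some x'"
    then show "x = x'" by (metis option.inject)
  qed
qed

theorem proposition4p4:
  assumes "zero_left_cancellative TYPE('a::{semigroup_mult,mult_zero})"
    and "categorical_at_zero TYPE('a)"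
    and "theta_constructible (X :: 'a set)"
  shows "\<exists>R :: 'a set. right_ideal R \<and> 0 \<in> R \<and> X = R - {0}"
proof -
  have sub: "X \<subseteq> - {0}" and h: "pid X \<in> inverse_hull"
    using assms(3) by (auto simp: theta_constructible_def)
  have g: "good (pid X)" using good_hull[OF assms(1,2) h] .
  have key: "x \<in> X \<Longrightarrow> x*s \<noteq> 0 \<Longrightarrow> x*s \<in> X" for x s
  proof -
    assume "x \<in> X" "x*s \<noteq> 0"
    then have px: "pid X x = Some x" by (simp add: pid_def)
    have "\<forall>x y. pid X x = Some y \<longrightarrow> (\<forall>s. x*s \<noteq> 0 \<longrightarrow> pid X (x*s) = Some (y*s))"
      using g unfolding good_def by blast
    then have "pid X (x*s) = Some (x*s)" using px \<open>x*s \<noteq> 0\<close> by blast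
    then show "x*s \<in> X" by (simp add: pid_def split: if_splits)
  qed
  show ?thesis
  proof (intro exI[of _ "insert 0 X"] conjI)
    show "right_ideal (insert 0 X)" unfolding right_ideal_def using key by auto
    show "X = insert 0 X - {0}" using sub by auto
  qed simp
qed

end
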